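(* Let $p$ be an odd prime, $R=F_p+vF_p$ with $v^2=v$, let $\vartheta=1-2v$ or $\vartheta=-1+2v$, and let $C$ be a $\vartheta$-constacyclic code of length $n$ over $R$ with generating set in standard form $\{vg_{1-v}(x),(1-v)g_v(x)\}$. Then $\phi_\vartheta(C)=[g_{1-v}(x)g_v(x)]$, the cyclic code of length $2n$ over $F_p$ (ideal of $F_p[x]/\langle x^{2n}-1\rangle$) generated by $g_{1-v}(x)g_v(x)$.
   Context: Write $\vartheta=\lambda+v\mu$ with $\lambda,\mu\in F_p$. A $\vartheta$-constacyclic code of length $n$ over $R$ is an $R$-submodule of $R^n$ closed under $(c_0,\dots,c_{n-1})\mapsto(\vartheta c_{n-1},c_0,\dots,c_{n-2})$, identified with an ideal of $R_n=R[x]/\langle x^n-\vartheta\rangle$ via $(c_i)\mapsto\sum c_ix^i$. A set $\{vg_1(x),(1-v)g_2(x)\}$ is a generating set in standard form for $C$ if it generates $C$ as an ideal, each $g_i\in F_p[x]$ is monic or $0$, $g_1\mid x^n-(\lambda+\mu)$ if $g_1\ne0$, and $g_2\mid x^n-\lambda$ if $g_2\neq0$. The Gray map $\phi_\vartheta:R_n\to F_p[x]/\langle x^{2n}-1\rangle$ sends $f(x)=r(x)+vq(x)$ ($r,q\in F_p[x]$ of degree $<n$) to $\lambda(\lambda+\mu)q(x)+x^n[-\mu r(x)-(\lambda+\mu)q(x)]$. For a monic divisor $g$ of $x^{2n}-1$, $[g(x)]$ is the ideal of $F_p[x]/\langle x^{2n}-1\rangle$ generated by $g$. *)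

theory Defs
  imports "HOL-Computational_Algebra.Polynomial" "HOL-Computational_Algebra.Primes"
begin

text \<open>Elements of R[x], R = F_p + v F_p with v^2 = v, are represented as pairs (A, B)
  of polynomials over F_p, standing for A(x) + v B(x).\<close>

type_synonym 'a vpoly = "'a poly \<times> 'a poly"

definition vadd :: "'a::comm_ring_1 vpoly \<Rightarrow> 'a vpoly \<Rightarrow> 'a vpoly" where
  "vadd f g = (fst f + fst g, snd f + snd g)"

text \<open>(A1 + v B1)(A2 + v B2) = A1 A2 + v (A1 B2 + B1 A2 + B1 B2), using v^2 = v.\<close>
definition vmul :: "'a::comm_ring_1 vpoly \<Rightarrow> 'a vpoly \<Rightarrow> 'a vpoly" where
  "vmul f g = (fst f * fst g, fst f * snd g + snd f * fst g + snd f * snd g)"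

text \<open>x^n - theta with theta = lam + v mu, as an element of R[x].\<close>
definition xn_minus_theta :: "nat \<Rightarrow> 'a::comm_ring_1 \<Rightarrow> 'a \<Rightarrow> 'a vpoly" where
  "xn_minus_theta n lam mu = (monom 1 n - [:lam:], - [:mu:])"

text \<open>The ideal of R_n = R[x]/<x^n - theta> generated by {v g1, (1-v) g2}, each residue
  class represented by its unique representative r + v q with deg r, deg q < n.\<close>
definition Rn_ideal_std :: "nat \<Rightarrow> 'a::comm_ring_1 \<Rightarrow> 'a \<Rightarrow> 'a poly \<Rightarrow> 'a poly \<Rightarrow> 'a vpoly set" where
  "Rn_ideal_std n lam mu g1 g2 =
     {(r, q). degree r < n \<and> degree q < n \<and>
        (\<exists>a b c. (r, q) = vadd (vadd (vmul a (0, g1)) (vmul b (g2, - g2)))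
                                  (vmul c (xn_minus_theta n lam mu)))}"

definition gray :: "nat \<Rightarrow> 'a::comm_ring_1 \<Rightarrow> 'a \<Rightarrow> 'a vpoly \<Rightarrow> 'a poly" where
  "gray n lam mu f = smult (lam * (lam + mu)) (snd f)
      + monom 1 n * (smult (- mu) (fst f) - smult (lam + mu) (snd f))"

definition cyclic_ideal :: "nat \<Rightarrow> 'a::field poly \<Rightarrow> 'a poly set" where
  "cyclic_ideal N g = {(g * a) mod (monom 1 N - 1) | a. True}"

end

theory Submission
  imports Defs
begin

lemma even_card_inv:
  fixes A :: "'a::ring_1 set"
  assumes two: "(1 + 1 :: 'a) = 0" and "finite A" "\<forall>x\<in>A. x + 1 \<in> A"
  shows "even (card A)"
  using assms(2,3)
proof (induction "card A" arbitrary: A rule: less_induct)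
  case less
  show ?case
  proof (cases "A = {}")
    case True then show ?thesis by simp
  next
    case False
    then obtain x where x: "x \<in> A" by blast
    define B where "B = A - {x, x + 1}"
    have ne: "x + 1 \<noteq> x" by simp
    have x1: "x + 1 \<in> A" using less.prems x by blast
    have c2: "card {x, x + 1} = 2" using ne by simp
    have cardA: "card A = card B + 2"
      using card_Diff_subset[of "{x, x+1}" A] less.prems x x1 c2 card_mono[of A "{x, x+1}"]
      unfolding B_def by auto
    have yy: "\<And>y::'a. y + 1 + 1 = y" using two by (simp add: add.assoc)
    have clos: "\<forall>y\<in>B. y + 1 \<in> B"
    proof
      fix y assume y: "y \<in> B"
      have "y + 1 \<in> A" using y less.prems unfolding B_def by blast
      moreover have "y + 1 \<noteq> x" using y yy[of y] unfolding B_def by auto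
      moreover have "y + 1 \<noteq> x + 1" using y unfolding B_def by auto
      ultimately show "y + 1 \<in> B" unfolding B_def by blast
    qed
    have "finite B" using less.prems unfolding B_def by simp
    hence "even (card B)" using less.hyps[of B] clos cardA by simp
    thus ?thesis using cardA by simp
  qed
qed

lemma two_ne0:
  assumes "odd p" "card (UNIV :: 'a::field set) = p"
  shows "(2::'a) \<noteq> 0"
proof
  assume h: "(2::'a) = 0"
  have "finite (UNIV :: 'a set)" using assms by (metis card.infinite even_zero)
  hence "even (card (UNIV :: 'a set))" using h by (intro even_card_inv) (simp_all add: one_add_one)
  with assms show False by simp
qed

lemma sm: "smult a p = [:a:] * p" by simp

lemma gray_eq:
  fixes l mu :: "'a::field"
  assumes "l * l = 1" "mu = - 2 * l"
  shows "gray n l mu (r, q) = (r + q) * ([:l:] * monom 1 n - 1) + r * ([:l:] * monom 1 n + 1)"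
proof -
  have a: "l * (l + mu) = -1" "- mu = l + l" "l + mu = - l" "l * (- l) = -1" using assms by (simp_all add: algebra_simps)
  have b: "[:l + l:] = [:l:] + [:l:]" "[:-l:] = - [:l:]" "[:-1::'a:] = -1" by (simp_all add: one_pCons)
  have "gray n l mu (r, q) = [:-1:] * q + monom 1 n * ([:l + l:] * r - [:-l:] * q)"
    unfolding gray_def sm by (simp only: a fst_conv snd_conv)
  also have "\<dots> = (r + q) * ([:l:] * monom 1 n - 1) + r * ([:l:] * monom 1 n + 1)"
    unfolding b by algebra
  finally show ?thesis .
qed

lemma main:
  fixes l mu :: "'a::field" and g1 g2 :: "'a poly"
  assumes ll: "l * l = 1" and mu: "mu = - 2 * l" and two: "(2::'a) \<noteq> 0" and n: "n > 0"
    and d1: "g1 dvd (monom 1 n - [:l + mu:])" and d2: "g2 dvd (monom 1 n - [:l:])"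
  shows "gray n l mu ` Rn_ideal_std n l mu g1 g2 = cyclic_ideal (2 * n) (g1 * g2)"
proof -
  define X :: "'a poly" where "X = monom 1 n"
  define M :: "'a poly" where "M = monom 1 (2 * n) - 1"
  define L :: "'a poly" where "L = [:l:]"
  have lm: "[:l + mu:] = - L" unfolding L_def using mu by simp
  have LL: "L * L = 1" unfolding L_def using ll by (simp add: one_pCons)
  have degX: "degree X = n" unfolding X_def by (simp add: degree_monom_eq)
  have X0: "X \<noteq> 0" unfolding X_def by simp
  have e1: "L * X + 1 = L * (monom 1 n - [:l + mu:])"
    unfolding lm X_def using LL by (simp add: algebra_simps)
  have e2: "L * X - 1 = L * (monom 1 n - [:l:])"
    unfolding L_def[symmetric] X_def using LL by (simp add: algebra_simps)
  have g1d: "g1 dvd L * X + 1" unfolding e1 using d1 by simp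
  have g2d: "g2 dvd L * X - 1" unfolding e2 using d2 by simp
  have XX: "X * X = monom 1 (2 * n)" unfolding X_def by (simp add: mult_monom mult_2)
  have Mf: "M = (monom 1 n - [:l + mu:]) * (monom 1 n - [:l:])"
    unfolding M_def lm XX[symmetric] L_def[symmetric] X_def[symmetric] using LL
    by (simp add: algebra_simps)
  have gM: "g1 * g2 dvd M" unfolding Mf using d1 d2 by (rule mult_dvd_mono)
  have degM: "degree M = 2 * n"
  proof (rule antisym)
    show "degree M \<le> 2 * n" unfolding M_def
      by (rule degree_diff_le) (auto simp: degree_monom_le)
    have "coeff M (2 * n) = 1" unfolding M_def using n by simp
    thus "2 * n \<le> degree M" by (intro le_degree) simp
  qed
  show ?thesis
  proof (rule set_eqI, rule iffI)
    fix y assume "y \<in> gray n l mu ` Rn_ideal_std n l mu g1 g2"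
    then obtain r q a b c where y: "y = gray n l mu (r, q)" and dr: "degree r < n" and dq: "degree q < n"
      and eq: "(r, q) = vadd (vadd (vmul a (0, g1)) (vmul b (g2, - g2))) (vmul c (xn_minus_theta n l mu))"
      unfolding Rn_ideal_std_def by blast
    have rq: "r = fst b * g2 + fst c * (monom 1 n - [:l:])"
      "q = (fst a + snd a) * g1 - fst b * g2 - fst c * [:mu:] + snd c * (monom 1 n - [:l:]) - snd c * [:mu:]"
      using eq unfolding vadd_def vmul_def xn_minus_theta_def by (auto simp: algebra_simps)
    have plus: "[:l:] + [:mu:] = [:l + mu:]" by simp
    have "r + q = (fst a + snd a) * g1 + (fst c + snd c) * (monom 1 n - [:l + mu:])"
      unfolding rq plus[symmetric] by (simp add: algebra_simps smult_add_left smult_add_right)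
    hence h1: "g1 dvd r + q" using d1 by simp
    have h2: "g2 dvd r" unfolding rq using d2 by simp
    have gy: "y = (r + q) * (L * X - 1) + r * (L * X + 1)"
      unfolding y gray_eq[OF ll mu] L_def X_def ..
    have dv: "g1 * g2 dvd y" unfolding gy
      using mult_dvd_mono[OF h1 g2d] mult_dvd_mono[OF g1d h2]
      by (metis dvd_add mult.commute)
    have dy: "degree y < 2 * n"
    proof -
      define P where "P = smult (- mu) r - smult (l + mu) q"
      have dP: "degree P < n" unfolding P_def
        by (rule degree_diff_less; rule le_less_trans[OF degree_smult_le]) (use dr dq in auto)
      have "degree (X * P) \<le> n + degree P" using degree_mult_le[of X P] degX by simp
      hence a: "degree (X * P) < 2 * n" using dP by linarith
      have b: "degree (smult (l * (l + mu)) q) < 2 * n" using degree_smult_le[of _ q] dq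
        by (metis le_less_trans less_le_trans le_add1 mult_2)
      have "y = smult (l * (l + mu)) q + X * P" unfolding y gray_def X_def P_def by simp
      thus ?thesis using degree_add_less[OF b a] by simp
    qed
    from dv obtain w where w: "y = g1 * g2 * w" by (auto elim: dvdE)
    have "(g1 * g2 * w) mod M = y" unfolding w[symmetric] by (rule mod_poly_less) (simp add: degM dy)
    thus "y \<in> cyclic_ideal (2 * n) (g1 * g2)" unfolding cyclic_ideal_def M_def by auto
  next
    fix h assume "h \<in> cyclic_ideal (2 * n) (g1 * g2)"
    then obtain a where ha: "h = (g1 * g2 * a) mod M" unfolding cyclic_ideal_def M_def by auto
    have M0: "M \<noteq> 0" using degM n by auto
    have dh: "degree h < 2 * n"
      using degree_mod_less[OF M0, of "g1 * g2 * a"] degM n ha by auto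
    have gh: "g1 * g2 dvd h" unfolding ha by (rule dvd_mod) (simp_all add: gM)
    define h0 where "h0 = h mod X"
    define h1 where "h1 = h div X"
    have hd: "h = h1 * X + h0" unfolding h0_def h1_def by simp
    have dh0: "degree h0 < n" using degree_mod_less[OF X0, of h] degX n unfolding h0_def by auto
    have dh1: "degree h1 < n"
    proof (cases "h1 = 0")
      case True thus ?thesis using n by simp
    next
      case False
      have "degree (h1 * X) = degree h1 + n" using False X0 degX by (simp add: degree_mult_eq)
      moreover have "degree h = degree (h1 * X)" unfolding hd
        by (rule degree_add_eq_left) (use dh0 \<open>degree (h1 * X) = degree h1 + n\<close> in simp)
      ultimately show ?thesis using dh by simp
    qed
    have "g1 dvd h" using gh by (rule dvd_mult_left)
    moreover have "h0 - L * h1 = h - h1 * (monom 1 n - [:l + mu:])"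
      unfolding hd lm X_def by (simp add: algebra_simps)
    ultimately have g1h: "g1 dvd h0 - L * h1" using d1 by (simp add: dvd_diff)
    have "g2 dvd h" using gh by (rule dvd_mult_right)
    moreover have "h0 + L * h1 = h - h1 * (monom 1 n - [:l:])"
      unfolding hd L_def X_def by (simp add: algebra_simps)
    ultimately have g2h: "g2 dvd h0 + L * h1" using d2 by (simp add: dvd_diff)
    define I :: "'a poly" where "I = [:inverse 2:]"
    have II: "I + I = 1" unfolding I_def using two by (simp add: one_pCons field_simps)
    define A where "A = - I * (h0 - L * h1)"
    define B where "B = I * (h0 + L * h1)"
    have gA: "g1 dvd A" unfolding A_def using g1h by simp
    have gB: "g2 dvd B" unfolding B_def using g2h by simp
    have "A + B = (I + I) * (L * h1)" unfolding A_def B_def by (simp add: algebra_simps)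
    hence AB1: "A + B = L * h1" unfolding II by simp
    have "B - A = (I + I) * h0" unfolding A_def B_def by (simp add: algebra_simps)
    hence AB2: "B - A = h0" unfolding II by simp
    have Bq: "B + - h0 = A" using AB2 by (simp add: algebra_simps)
    have "gray n l mu (B, - h0) = A * (L * X - 1) + B * (L * X + 1)"
      unfolding gray_eq[OF ll mu] Bq L_def X_def ..
    also have "\<dots> = (L * L) * X * h1 + h0"
    proof -
      have "A * (L * X - 1) + B * (L * X + 1) = L * X * (A + B) + (B - A)" by (simp add: algebra_simps)
      thus ?thesis unfolding AB1 AB2 by (simp add: algebra_simps)
    qed
    also have "\<dots> = h" unfolding LL hd by (simp add: algebra_simps)
    finally have gr: "gray n l mu (B, - h0) = h" .
    have Ism: "\<And>p. I * p = smult (inverse 2) p" unfolding I_def by simp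
    have Lsm: "\<And>p. L * p = smult l p" unfolding L_def by simp
    have dB: "degree B < n"
    proof -
      have "degree B \<le> degree (h0 + L * h1)" unfolding B_def Ism by (rule degree_smult_le)
      also have "\<dots> \<le> max (degree h0) (degree (L * h1))" by (rule degree_add_le_max)
      also have "degree (L * h1) \<le> degree h1" unfolding Lsm by (rule degree_smult_le)
      finally show ?thesis using dh0 dh1 by linarith
    qed
    obtain s where s: "A = g1 * s" using gA by (auto elim: dvdE)
    obtain t where t: "B = g2 * t" using gB by (auto elim: dvdE)
    have "(B, - h0) = vadd (vadd (vmul (s, 0) (0, g1)) (vmul (t, 0) (g2, - g2)))
                        (vmul (0, 0) (xn_minus_theta n l mu))"
    proof -
      have "- h0 = A - B" using AB2[symmetric] by simp
      thus ?thesis unfolding vadd_def vmul_def s t by (simp add: algebra_simps)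
    qed
    hence ex: "\<exists>a b c. (B, - h0) = vadd (vadd (vmul a (0, g1)) (vmul b (g2, - g2)))
                        (vmul c (xn_minus_theta n l mu))" by blast
    have "(B, - h0) \<in> Rn_ideal_std n l mu g1 g2"
      unfolding Rn_ideal_std_def using dB dh0 ex by (simp only: mem_Collect_eq case_prod_conv degree_minus)
    thus "h \<in> gray n l mu ` Rn_ideal_std n l mu g1 g2" using gr by (metis image_eqI)
  qed
qed
theorem corollary3p11:
  fixes p n :: nat and lam mu :: "'a::field" and g1 g2 :: "'a poly"
    and C :: "'a vpoly set"
  assumes "prime p" and "odd p" and "card (UNIV :: 'a set) = p"
    and "n > 0"
    and "(lam = 1 \<and> mu = -2) \<or> (lam = -1 \<and> mu = 2)"
    and "lead_coeff g1 = 1" and "g1 dvd (monom 1 n - [:lam + mu:])"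
    and "lead_coeff g2 = 1" and "g2 dvd (monom 1 n - [:lam:])"
    and "C = Rn_ideal_std n lam mu g1 g2"
  shows "gray n lam mu ` C = cyclic_ideal (2 * n) (g1 * g2)"
proof -
  have two: "(2::'a) \<noteq> 0" using two_ne0 assms(2,3) by blast
  have "lam * lam = 1 \<and> mu = - 2 * lam" using assms(5) by auto
  thus ?thesis using main[OF _ _ two assms(4) assms(7) assms(9)] assms(10) by blast
qed

end
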